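(* Let $N\ge 1$ and $M\ge 1$ be integers and let $\mathcal{N}=(p_1,\ldots,p_N)$ with $p_i>0$ and $\sum_{i=1}^N p_i=1$. Let $X_1,\ldots,X_M$ be independent random variables with values in $\bar N=\{1,\ldots,N\}$ and $\Pr(X_j=i)=p_i$, and let $\Pr(K\mid M,\mathcal{N})$ be the probability that exactly $K$ distinct values occur among $X_1,\ldots,X_M$. For $s\subseteq\bar N$ write $\Pr(s)=\sum_{i\in s}p_i$. Then for every real $t$, \[ \sum_{K=1}^{N}e^{Kt}\Pr(K\mid M,\mathcal{N})=\sum_{k=1}^{N}\ \sum_{\{s\subseteq\bar N:\ |s|=k\}}\Pr(s)^M\, e^{kt}\,(1-e^{t})^{N-k}. \]
   Context: The left-hand side is the moment-generating function of the type-token distribution $\Pr(K\mid M,\mathcal{N})$, $K=1,\ldots,N$. *)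

theory Defs
  imports Complex_Main "HOL-Library.FuncSet"
begin

text \<open>The joint law of (X_1,...,X_M) is the product measure, i.e. the outcome
f : {1..M} -> {1..N} has probability prod_j p (f j).\<close>

definition type_token_prob :: "nat \<Rightarrow> nat \<Rightarrow> (nat \<Rightarrow> real) \<Rightarrow> nat \<Rightarrow> real" where
  "type_token_prob N M p K =
     (\<Sum>f \<in> {1..M} \<rightarrow>\<^sub>E {1..N}.
        if card (f ` {1..M}) = K then (\<Prod>j\<in>{1..M}. p (f j)) else 0)"

end

theory Submission
  imports Defs
begin

lemma inner_sum:
  fixes x y :: real
  assumes U: "finite U" and AU: "A \<subseteq> U"
  shows "(\<Sum>u\<in>{u. A \<subseteq> u \<and> u \<subseteq> U}. x ^ card u * y ^ (card U - card u))
         = x ^ card A * (x + y) ^ (card U - card A)"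
proof -
  define C where "C = U - A"
  have fC: "finite C" using U C_def by simp
  have fA: "finite A" using U AU finite_subset by blast
  have img: "{u. A \<subseteq> u \<and> u \<subseteq> U} = (\<lambda>B. A \<union> B) ` Pow C"
  proof
    show "{u. A \<subseteq> u \<and> u \<subseteq> U} \<subseteq> (\<lambda>B. A \<union> B) ` Pow C"
    proof
      fix u assume "u \<in> {u. A \<subseteq> u \<and> u \<subseteq> U}"
      hence "u = A \<union> (u - A)" "u - A \<in> Pow C" using C_def by auto
      thus "u \<in> (\<lambda>B. A \<union> B) ` Pow C" by blast
    qed
    show "(\<lambda>B. A \<union> B) ` Pow C \<subseteq> {u. A \<subseteq> u \<and> u \<subseteq> U}" using C_def AU by auto
  qed
  have inj: "inj_on (\<lambda>B. A \<union> B) (Pow C)"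
    unfolding inj_on_def C_def by blast
  have cU: "card U = card A + card C" using C_def U AU
    by (metis card_Diff_subset fA card_mono le_add_diff_inverse)
  have "(\<Sum>u\<in>{u. A \<subseteq> u \<and> u \<subseteq> U}. x ^ card u * y ^ (card U - card u))
      = (\<Sum>B\<in>Pow C. x ^ card (A \<union> B) * y ^ (card U - card (A \<union> B)))"
    unfolding img by (simp add: sum.reindex[OF inj])
  also have "\<dots> = (\<Sum>B\<in>Pow C. x ^ card A * (x ^ card B * y ^ card (C - B)))"
  proof (rule sum.cong[OF refl])
    fix B assume B: "B \<in> Pow C"
    hence fB: "finite B" using fC finite_subset by auto
    have disj: "A \<inter> B = {}" using B C_def by auto
    have c1: "card (A \<union> B) = card A + card B" using card_Un_disjoint[OF fA fB disj] .
    have c2: "card (C - B) = card C - card B" using B fC by (simp add: card_Diff_subset finite_subset)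
    show "x ^ card (A \<union> B) * y ^ (card U - card (A \<union> B)) = x ^ card A * (x ^ card B * y ^ card (C - B))"
      using c1 c2 cU by (simp add: power_add)
  qed
  also have "\<dots> = x ^ card A * (\<Sum>B\<in>Pow C. (\<Prod>i\<in>B. x) * (\<Prod>i\<in>C - B. y))"
    by (simp add: sum_distrib_left)
  also have "(\<Sum>B\<in>Pow C. (\<Prod>i\<in>B. x) * (\<Prod>i\<in>C - B. y)) = (\<Prod>i\<in>C. x + y)"
    using prod_add[OF fC, of "\<lambda>_. x" "\<lambda>_. y"] by simp
  also have "\<dots> = (x + y) ^ (card U - card A)" using cU by simp
  finally show ?thesis .
qed

lemma pow_sum:
  fixes p :: "nat \<Rightarrow> real"
  assumes "finite u"
  shows "(sum p u) ^ M = (\<Sum>f\<in>{1..M} \<rightarrow>\<^sub>E u. \<Prod>j\<in>{1..M}. p (f j))"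
  using prod_sum_PiE[of "{1..M}" "\<lambda>_. u" "\<lambda>_ y. p y"] assms by simp

theorem lemma1:
  fixes N M :: nat and p :: "nat \<Rightarrow> real" and t :: real
  assumes "N \<ge> 1" and "M \<ge> 1"
    and "\<forall>i\<in>{1..N}. p i > 0"
    and "(\<Sum>i=1..N. p i) = 1"
  shows "(\<Sum>K=1..N. exp (real K * t) * type_token_prob N M p K) =
         (\<Sum>k=1..N. \<Sum>s\<in>{s. s \<subseteq> {1..N} \<and> card s = k}.
            (sum p s) ^ M * exp (real k * t) * (1 - exp t) ^ (N - k))"
proof -
  define x where "x = exp t"
  define F where "F = {1..M} \<rightarrow>\<^sub>E {1..N}"
  define W where "W f = (\<Prod>j\<in>{1..M}. p (f j))" for f :: "nat \<Rightarrow> nat"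
  have fF: "finite F" unfolding F_def by (simp add: finite_PiE)
  have imcard: "card (f ` {1..M}) \<in> {1..N}" if "f \<in> F" for f
  proof -
    have "f ` {1..M} \<subseteq> {1..N}" using that F_def by (auto simp: PiE_def Pi_def)
    hence "card (f ` {1..M}) \<le> card {1..N}" by (intro card_mono) auto
    hence "card (f ` {1..M}) \<le> N" by simp
    moreover have "f ` {1..M} \<noteq> {}" using assms(2) by auto
    hence "card (f ` {1..M}) \<ge> 1" by (simp add: Suc_leI card_gt_0_iff)
    ultimately show ?thesis by simp
  qed
  have L: "(\<Sum>K=1..N. exp (real K * t) * type_token_prob N M p K)
       = (\<Sum>f\<in>F. x ^ card (f ` {1..M}) * W f)"
  proof -
    have "(\<Sum>K=1..N. exp (real K * t) * type_token_prob N M p K)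
       = (\<Sum>K=1..N. \<Sum>f\<in>F. if card (f ` {1..M}) = K then x ^ K * W f else 0)"
      unfolding type_token_prob_def F_def W_def x_def
      by (simp add: sum_distrib_left exp_of_nat_mult if_distrib cong: if_cong)
    also have "\<dots> = (\<Sum>f\<in>F. \<Sum>K=1..N. if card (f ` {1..M}) = K then x ^ K * W f else 0)"
      by (rule sum.swap)
    also have "\<dots> = (\<Sum>f\<in>F. x ^ card (f ` {1..M}) * W f)"
      by (rule sum.cong[OF refl]) (use imcard in \<open>simp add: sum.delta'\<close>)
    finally show ?thesis .
  qed
  define P where "P = Pow {1..N}"
  have fP: "finite P" unfolding P_def by simp
  define g where "g u = (sum p u) ^ M * x ^ card u * (1 - x) ^ (N - card u)" for u
  have R1: "(\<Sum>k=1..N. \<Sum>s\<in>{s. s \<subseteq> {1..N} \<and> card s = k}.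
            (sum p s) ^ M * exp (real k * t) * (1 - exp t) ^ (N - k)) = (\<Sum>u\<in>P. g u)"
  proof -
    have "(\<Sum>k=1..N. \<Sum>s\<in>{s. s \<subseteq> {1..N} \<and> card s = k}.
            (sum p s) ^ M * exp (real k * t) * (1 - exp t) ^ (N - k))
        = (\<Sum>k=1..N. \<Sum>s\<in>P. if card s = k then g s else 0)"
    proof (rule sum.cong[OF refl])
      fix k
      have "{s. s \<subseteq> {1..N} \<and> card s = k} = {s\<in>P. card s = k}" unfolding P_def by auto
      thus "(\<Sum>s\<in>{s. s \<subseteq> {1..N} \<and> card s = k}.
            (sum p s) ^ M * exp (real k * t) * (1 - exp t) ^ (N - k)) = (\<Sum>s\<in>P. if card s = k then g s else 0)"
        using fP by (auto simp: sum.inter_filter g_def x_def exp_of_nat_mult intro!: sum.cong)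
    qed
    also have "\<dots> = (\<Sum>s\<in>P. \<Sum>k=1..N. if card s = k then g s else 0)" by (rule sum.swap)
    also have "\<dots> = (\<Sum>s\<in>P. g s)"
    proof (rule sum.cong[OF refl])
      fix s assume s: "s \<in> P"
      have "card s \<le> card {1..N}" using s unfolding P_def by (intro card_mono) auto
      hence le: "card s \<le> N" by simp
      have fs: "finite s" using s unfolding P_def by (auto intro: finite_subset)
      show "(\<Sum>k=1..N. if card s = k then g s else 0) = g s"
      proof (cases "card s = 0")
        case True
        hence "s = {}" using fs by simp
        hence "g s = 0" using assms(2) by (simp add: g_def)
        thus ?thesis by simp
      next
        case False thus ?thesis using le by (simp add: sum.delta')
      qed
    qed
    finally show ?thesis .
  qed
  have R2: "(\<Sum>u\<in>P. g u) = (\<Sum>u\<in>P. \<Sum>f\<in>F. if f ` {1..M} \<subseteq> u then W f * (x ^ card u * (1 - x) ^ (N - card u)) else 0)"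
  proof (rule sum.cong[OF refl])
    fix u assume u: "u \<in> P"
    hence fu: "finite u" unfolding P_def using finite_subset by auto
    have eq: "{1..M} \<rightarrow>\<^sub>E u = {f\<in>F. f ` {1..M} \<subseteq> u}"
      using u unfolding P_def F_def by (auto simp: PiE_def Pi_def)
    show "g u = (\<Sum>f\<in>F. if f ` {1..M} \<subseteq> u then W f * (x ^ card u * (1 - x) ^ (N - card u)) else 0)"
      unfolding g_def pow_sum[OF fu, of p M] eq
      by (auto simp: sum.inter_filter[OF fF] sum_distrib_right W_def intro!: sum.cong)
  qed
  also have "\<dots> = (\<Sum>f\<in>F. \<Sum>u\<in>P. if f ` {1..M} \<subseteq> u then W f * (x ^ card u * (1 - x) ^ (N - card u)) else 0)"
    by (rule sum.swap)
  also have "\<dots> = (\<Sum>f\<in>F. x ^ card (f ` {1..M}) * W f)"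
  proof (rule sum.cong[OF refl])
    fix f assume f: "f \<in> F"
    have sub: "f ` {1..M} \<subseteq> {1..N}" using f F_def by (auto simp: PiE_def Pi_def)
    have "{u\<in>P. f ` {1..M} \<subseteq> u} = {u. f ` {1..M} \<subseteq> u \<and> u \<subseteq> {1..N}}" unfolding P_def by auto
    hence "(\<Sum>u\<in>P. if f ` {1..M} \<subseteq> u then W f * (x ^ card u * (1 - x) ^ (N - card u)) else 0)
        = W f * (\<Sum>u\<in>{u. f ` {1..M} \<subseteq> u \<and> u \<subseteq> {1..N}}. x ^ card u * (1 - x) ^ (card {1..N} - card u))"
      by (simp add: sum.inter_filter[OF fP, symmetric] sum_distrib_left)
    also have "\<dots> = W f * (x ^ card (f ` {1..M}) * (x + (1 - x)) ^ (card {1..N} - card (f ` {1..M})))"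
      using inner_sum[OF _ sub] by simp
    finally show "(\<Sum>u\<in>P. if f ` {1..M} \<subseteq> u then W f * (x ^ card u * (1 - x) ^ (N - card u)) else 0)
        = x ^ card (f ` {1..M}) * W f" by simp
  qed
  finally show ?thesis using L R1 by simp
qed

end
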